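(* Consider $CP(N)$ with multiplicative rates $\psi(i,j)=2ij$, started from $(N,0,\dots,0)$. Define functions $b_k(t)$, $t\ge0$, $k\ge1$, by $b_1(t)=e^t$ and $$b_k(t)=k\,e^{k^2t}\int_0^t e^{-k^2u}\sum_{i+j=k}b_i(u)b_j(u)\,du,\qquad k\ge2,$$ (sum over ordered pairs of positive integers). These functions do not depend on $N$, and for every $N\ge1$, $t\ge0$ and $\eta=(n_1,\dots,n_N)\in\Omega_N$, $$\mathbb P(X_N^{(\rho)}(t)=\eta)=N!\,e^{-N^2t}\prod_{k=1}^N\frac{(b_k(t))^{n_k}}{k^{n_k}n_k!}.$$
   Context: $\Omega_N$ is the set of partitions $\eta=(n_1,\dots,n_N)$ of $N$ ($\sum_k kn_k=N$). $CP(N)$ is the continuous-time Markov chain on $\Omega_N$ where any two distinct clusters of sizes $i,j$ merge into one of size $i+j$ at rate $\psi(i,j)$; the transition $\eta\to\eta^{(i,j)}$ has rate $n_in_j\psi(i,j)$ for $i\neq j$ and $\frac{n_i(n_i-1)}2\psi(i,i)$ for $i=j$. *)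

theory Defs
  imports "HOL-Analysis.Analysis"
begin

text \<open>A state eta = (n_1,...,n_N) is encoded as a function eta :: nat => nat,
  eta k = n_k = number of clusters of size k; entries outside 1..N are 0.\<close>

definition Omega :: "nat \<Rightarrow> (nat \<Rightarrow> nat) set" where
  "Omega N = {eta. (\<forall>k. (k < 1 \<or> k > N) \<longrightarrow> eta k = 0) \<and> (\<Sum>k=1..N. k * eta k) = N}"

definition init_state :: "nat \<Rightarrow> nat \<Rightarrow> nat" where
  "init_state N = (\<lambda>k. if k = 1 then N else 0)"

definition merge :: "(nat \<Rightarrow> nat) \<Rightarrow> nat \<Rightarrow> nat \<Rightarrow> nat \<Rightarrow> nat" where
  "merge eta i j = (\<lambda>k. eta k - (if k = i then 1 else 0) - (if k = j then 1 else 0)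
                          + (if k = i + j then 1 else 0))"

definition merge_rate :: "(nat \<Rightarrow> nat \<Rightarrow> real) \<Rightarrow> (nat \<Rightarrow> nat) \<Rightarrow> nat \<Rightarrow> nat \<Rightarrow> real" where
  "merge_rate psi eta i j =
     (if i \<noteq> j then real (eta i) * real (eta j) * psi i j
      else real (eta i) * (real (eta i) - 1) / 2 * psi i i)"

definition merge_pairs :: "nat \<Rightarrow> (nat \<times> nat) set" where
  "merge_pairs N = {(i, j). 1 \<le> i \<and> i \<le> j \<and> j \<le> N}"

definition generator :: "(nat \<Rightarrow> nat \<Rightarrow> real) \<Rightarrow> nat \<Rightarrow> (nat \<Rightarrow> nat) \<Rightarrow> (nat \<Rightarrow> nat) \<Rightarrow> real" where
  "generator psi N eta eta' =
     (\<Sum>(i, j)\<in>merge_pairs N. if merge eta i j = eta' then merge_rate psi eta i j else 0)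
     - (if eta = eta' then (\<Sum>(i, j)\<in>merge_pairs N. merge_rate psi eta i j) else 0)"

fun gen_pow :: "(nat \<Rightarrow> nat \<Rightarrow> real) \<Rightarrow> nat \<Rightarrow> nat \<Rightarrow> (nat \<Rightarrow> nat) \<Rightarrow> (nat \<Rightarrow> nat) \<Rightarrow> real" where
  "gen_pow psi N 0 eta eta' = (if eta = eta' then 1 else 0)"
| "gen_pow psi N (Suc m) eta eta' =
     (\<Sum>zeta\<in>Omega N. generator psi N eta zeta * gen_pow psi N m zeta eta')"

text \<open>Transition function P(t) = exp(tQ) of the finite-state continuous-time Markov chain CP(N):
  trans_prob psi N t eta0 eta = P(X(t) = eta | X(0) = eta0).\<close>
definition trans_prob :: "(nat \<Rightarrow> nat \<Rightarrow> real) \<Rightarrow> nat \<Rightarrow> real \<Rightarrow> (nat \<Rightarrow> nat) \<Rightarrow> (nat \<Rightarrow> nat) \<Rightarrow> real" where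
  "trans_prob psi N t eta0 eta = (\<Sum>m. t ^ m / fact m * gen_pow psi N m eta0 eta)"

function bfun :: "nat \<Rightarrow> real \<Rightarrow> real" where
  "bfun k t = (if k = 0 then 0 else if k = 1 then exp t
     else real k * exp (real (k^2) * t) *
          integral {0..t} (\<lambda>u. exp (- real (k^2) * u) * (\<Sum>i\<in>{1..k-1}. bfun i u * bfun (k - i) u)))"
  by auto
termination
  by (relation "Wellfounded.measure fst") auto

end

theory Submission
  imports Defs
begin

declare bfun.simps[simp del]

definition Sb :: "nat \<Rightarrow> real \<Rightarrow> real" where
  "Sb k u = (\<Sum>i\<in>{1..k-1}. bfun i u * bfun (k - i) u)"

lemma bfun_0[simp]: "bfun 0 t = 0"
  by (subst bfun.simps) simp

lemma bfun_1[simp]: "bfun (Suc 0) t = exp t"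
  by (subst bfun.simps) simp

lemma bfun_ge2: "k \<ge> 2 \<Longrightarrow> bfun k t = real k * exp (real (k^2) * t) *
    integral {0..t} (\<lambda>u. exp (- real (k^2) * u) * Sb k u)"
  by (subst bfun.simps) (simp add: Sb_def)

lemma bfun_deriv:
  assumes T: "T \<ge> 0"
  shows "k \<ge> 1 \<Longrightarrow> x \<in> {0..T} \<Longrightarrow>
    (bfun k has_real_derivative (real (k^2) * bfun k x + real k * Sb k x)) (at x within {0..T})"
proof (induction k arbitrary: x rule: less_induct)
  case (less k)
  show ?case
  proof (cases "k = 1")
    case True
    have "Sb 1 x = 0" by (simp add: Sb_def)
    then show ?thesis using True
      by (auto intro!: derivative_eq_intros)
  next
    case False
    with less.prems have k2: "k \<ge> 2" by simp
    have cont: "continuous_on {0..T} (bfun i)" if "1 \<le> i" "i < k" for i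
      by (rule DERIV_continuous_on) (rule less.IH[OF that(2) that(1)])
    have contS: "continuous_on {0..T} (Sb k)"
      unfolding Sb_def
      by (intro continuous_intros cont) auto
    have contF: "continuous_on {0..T} (\<lambda>u. exp (- real (k^2) * u) * Sb k u)"
      by (intro continuous_intros contS)
    have dI: "((\<lambda>u. integral {0..u} (\<lambda>u. exp (- real (k^2) * u) * Sb k u)) has_real_derivative
        (exp (- real (k^2) * x) * Sb k x)) (at x within {0..T})"
      using integral_has_vector_derivative[OF contF less.prems(2)]
      by (simp add: has_real_derivative_iff_has_vector_derivative)
    have eq: "bfun k = (\<lambda>u. real k * exp (real (k^2) * u) *
        integral {0..u} (\<lambda>u. exp (- real (k^2) * u) * Sb k u))"
      using bfun_ge2[OF k2] by auto
    have ee: "exp y * exp (- y) = 1" for y :: real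
      by (simp add: exp_minus_inverse)
    show ?thesis
      unfolding eq
      apply (rule derivative_eq_intros refl dI)+
      using ee by (simp add: algebra_simps)
  qed
qed


lemma Omega_out:
  assumes "eta \<in> Omega N" "k < 1 \<or> k > N" shows "eta k = 0"
proof -
  have "\<forall>k. (k < 1 \<or> k > N) \<longrightarrow> eta k = 0"
    using assms(1) unfolding Omega_def mem_Collect_eq by (rule conjunct1)
  then have "(k < 1 \<or> k > N) \<longrightarrow> eta k = 0" by (rule spec)
  then show ?thesis using assms(2) by (rule mp)
qed

lemma Omega_sum: "eta \<in> Omega N \<Longrightarrow> (\<Sum>k=1..N. k * eta k) = N"
  unfolding Omega_def mem_Collect_eq by (rule conjunct2)

lemma Omega_I: "(\<forall>k. (k < 1 \<or> k > N) \<longrightarrow> eta k = 0) \<Longrightarrow> (\<Sum>k=1..N. k * eta k) = N \<Longrightarrow> eta \<in> Omega N"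
  unfolding Omega_def mem_Collect_eq by (rule conjI)

lemma Omega_finite: "finite (Omega N)"
proof -
  have "Omega N \<subseteq> {f. \<forall>x. (x \<in> {1..N} \<longrightarrow> f x \<in> {0..N}) \<and> (x \<notin> {1..N} \<longrightarrow> f x = 0)}"
  proof safe
    fix f x assume f: "f \<in> Omega N" and x: "x \<in> {1..N}"
    have "x * f x \<le> (\<Sum>k=1..N. k * f k)"
      by (rule member_le_sum) (use x in auto)
    also have "\<dots> = N" using f by (rule Omega_sum)
    finally have "x * f x \<le> N" .
    moreover have "f x \<le> x * f x" using x by simp
    ultimately have "f x \<le> N" by linarith
    then show "f x \<in> {0..N}" by simp
  next
    fix f x assume f: "f \<in> Omega N" and x: "x \<notin> {1..N}"
    show "f x = 0" using x by (intro Omega_out[OF f]) auto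
  qed
  moreover have "finite {f. \<forall>x. (x \<in> {1..N} \<longrightarrow> f x \<in> {0..N}) \<and> (x \<notin> {1..N} \<longrightarrow> f x = (0::nat))}"
    by (rule finite_set_of_finite_funs) auto
  ultimately show ?thesis by (rule finite_subset)
qed

lemma gen_pow_assoc:
  assumes "b \<in> Omega N"
  shows "a \<in> Omega N \<Longrightarrow> gen_pow psi N (Suc m) a b = (\<Sum>z\<in>Omega N. gen_pow psi N m a z * generator psi N z b)"
proof (induction m arbitrary: a)
  case 0
  then show ?case using assms Omega_finite[of N]
    by (simp add: if_distrib[of "\<lambda>x. _ * x"] if_distrib[of "\<lambda>x. x * _"] sum.delta sum.delta' cong: if_cong)
next
  case (Suc m)
  have "gen_pow psi N (Suc (Suc m)) a b =
      (\<Sum>z\<in>Omega N. generator psi N a z * (\<Sum>y\<in>Omega N. gen_pow psi N m z y * generator psi N y b))"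
    by (simp only: gen_pow.simps(2)[of psi N "Suc m"]) (rule sum.cong[OF refl], simp only: Suc.IH)
  also have "\<dots> = (\<Sum>z\<in>Omega N. \<Sum>y\<in>Omega N. generator psi N a z * gen_pow psi N m z y * generator psi N y b)"
    by (simp add: sum_distrib_left mult.assoc)
  also have "\<dots> = (\<Sum>y\<in>Omega N. \<Sum>z\<in>Omega N. generator psi N a z * gen_pow psi N m z y * generator psi N y b)"
    by (rule sum.swap)
  also have "\<dots> = (\<Sum>y\<in>Omega N. gen_pow psi N (Suc m) a y * generator psi N y b)"
    by (simp add: sum_distrib_right)
  finally show ?case .
qed

definition genK :: "(nat \<Rightarrow> nat \<Rightarrow> real) \<Rightarrow> nat \<Rightarrow> real" where
  "genK psi N = (\<Sum>z\<in>Omega N. \<Sum>y\<in>Omega N. \<bar>generator psi N z y\<bar>)"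

lemma genK_nonneg: "genK psi N \<ge> 0"
  unfolding genK_def by (intro sum_nonneg) auto

lemma gen_row_bound: "a \<in> Omega N \<Longrightarrow> (\<Sum>y\<in>Omega N. \<bar>generator psi N a y\<bar>) \<le> genK psi N"
  unfolding genK_def
  by (rule member_le_sum[where f = "\<lambda>z. \<Sum>y\<in>Omega N. \<bar>generator psi N z y\<bar>"])
     (auto intro: sum_nonneg simp: Omega_finite)

lemma gen_pow_bound:
  "a \<in> Omega N \<Longrightarrow> \<bar>gen_pow psi N m a b\<bar> \<le> genK psi N ^ m"
proof (induction m arbitrary: a)
  case 0
  then show ?case by simp
next
  case (Suc m)
  have "\<bar>gen_pow psi N (Suc m) a b\<bar> \<le> (\<Sum>z\<in>Omega N. \<bar>generator psi N a z\<bar> * \<bar>gen_pow psi N m z b\<bar>)"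
    by (simp add: sum_abs[THEN order_trans] abs_mult)
  also have "\<dots> \<le> (\<Sum>z\<in>Omega N. \<bar>generator psi N a z\<bar> * genK psi N ^ m)"
    by (intro sum_mono mult_left_mono Suc.IH) auto
  also have "\<dots> = (\<Sum>z\<in>Omega N. \<bar>generator psi N a z\<bar>) * genK psi N ^ m"
    by (simp add: sum_distrib_right)
  also have "\<dots> \<le> genK psi N * genK psi N ^ m"
    by (intro mult_right_mono gen_row_bound Suc.prems) (simp add: genK_nonneg)
  finally show ?case by simp
qed

lemma trans_summable:
  assumes "a \<in> Omega N"
  shows "summable (\<lambda>m. t ^ m / fact m * gen_pow psi N m a b)"
proof (rule summable_comparison_test[of _ "\<lambda>m. (genK psi N * \<bar>t\<bar>) ^ m / fact m"])
  show "summable (\<lambda>m. (genK psi N * \<bar>t\<bar>) ^ m / fact m)"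
    using summable_exp_generic[of "genK psi N * \<bar>t\<bar>"] by (simp add: field_simps)
  show "\<exists>Na. \<forall>n\<ge>Na. norm (t ^ n / fact n * gen_pow psi N n a b) \<le> (genK psi N * \<bar>t\<bar>) ^ n / fact n"
  proof (intro exI allI impI)
    fix n :: nat
    have "norm (t ^ n / fact n * gen_pow psi N n a b) = \<bar>t\<bar> ^ n / fact n * \<bar>gen_pow psi N n a b\<bar>"
      by (simp add: abs_mult power_abs)
    also have "\<dots> \<le> \<bar>t\<bar> ^ n / fact n * genK psi N ^ n"
      by (intro mult_left_mono gen_pow_bound assms) auto
    also have "\<dots> = (genK psi N * \<bar>t\<bar>) ^ n / fact n"
      by (simp add: power_mult_distrib)
    finally show "norm (t ^ n / fact n * gen_pow psi N n a b) \<le> (genK psi N * \<bar>t\<bar>) ^ n / fact n" .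
  qed
qed

lemma trans_prob_0:
  "trans_prob psi N 0 a b = (if a = b then 1 else 0)"
proof -
  have "trans_prob psi N 0 a b = (\<Sum>m. gen_pow psi N m a b / fact m * 0 ^ m)"
    unfolding trans_prob_def by (intro suminf_cong) simp
  also have "\<dots> = gen_pow psi N 0 a b / fact 0"
    by (rule powser_zero)
  finally show ?thesis by simp
qed

lemma trans_deriv:
  assumes a: "a \<in> Omega N" and b: "b \<in> Omega N"
  shows "((\<lambda>t. trans_prob psi N t a b) has_real_derivative
          (\<Sum>z\<in>Omega N. trans_prob psi N t a z * generator psi N z b)) (at t)"
proof -
  define c where "c m = gen_pow psi N m a b / fact m" for m
  have eq: "(\<lambda>t. trans_prob psi N t a b) = (\<lambda>t. \<Sum>m. c m * t ^ m)"
    unfolding trans_prob_def c_def by (intro ext suminf_cong) simp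
  have sm: "summable (\<lambda>n. c n * y ^ n)" for y :: real
    using trans_summable[OF a, of y psi b] unfolding c_def
    by (simp add: mult_ac)
  have d: "((\<lambda>t. \<Sum>m. c m * t ^ m) has_real_derivative (\<Sum>n. diffs c n * t ^ n)) (at t)"
    by (rule termdiffs_strong_converges_everywhere[OF sm])
  have "(\<Sum>n. diffs c n * t ^ n) = (\<Sum>n. t ^ n / fact n * gen_pow psi N (Suc n) a b)"
  proof (intro suminf_cong)
    fix n
    have "diffs c n = gen_pow psi N (Suc n) a b / fact n"
      unfolding diffs_def c_def by (simp del: gen_pow.simps of_nat_Suc add: fact_Suc)
    then show "diffs c n * t ^ n = t ^ n / fact n * gen_pow psi N (Suc n) a b"
      by (simp del: gen_pow.simps)
  qed
  also have "\<dots> = (\<Sum>n. \<Sum>z\<in>Omega N. t ^ n / fact n * gen_pow psi N n a z * generator psi N z b)"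
    by (intro suminf_cong) (simp only: gen_pow_assoc[OF b a] sum_distrib_left mult.assoc)
  also have "\<dots> = (\<Sum>z\<in>Omega N. \<Sum>n. t ^ n / fact n * gen_pow psi N n a z * generator psi N z b)"
    by (rule suminf_sum) (intro summable_mult2 trans_summable a)
  also have "\<dots> = (\<Sum>z\<in>Omega N. trans_prob psi N t a z * generator psi N z b)"
    unfolding trans_prob_def
    by (intro sum.cong refl suminf_mult2[symmetric] trans_summable a)
  finally show ?thesis using d eq by simp
qed


lemma ode_unique:
  fixes p q :: "real \<Rightarrow> 'a \<Rightarrow> real" and Q :: "'a \<Rightarrow> 'a \<Rightarrow> real"
  assumes T: "T \<ge> 0" and fin: "finite A"
    and dp: "\<And>e x. e \<in> A \<Longrightarrow> x \<in> {0..T} \<Longrightarrow>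
       ((\<lambda>s. p s e) has_real_derivative (\<Sum>z\<in>A. p x z * Q z e)) (at x within {0..T})"
    and dq: "\<And>e x. e \<in> A \<Longrightarrow> x \<in> {0..T} \<Longrightarrow>
       ((\<lambda>s. q s e) has_real_derivative (\<Sum>z\<in>A. q x z * Q z e)) (at x within {0..T})"
    and init: "\<And>e. e \<in> A \<Longrightarrow> p 0 e = q 0 e"
  shows "e \<in> A \<Longrightarrow> p T e = q T e"
proof -
  define d where "d s e = p s e - q s e" for s e
  have dd: "((\<lambda>s. d s e) has_real_derivative (\<Sum>z\<in>A. d x z * Q z e)) (at x within {0..T})"
    if "e \<in> A" "x \<in> {0..T}" for e x
  proof -
    have "((\<lambda>s. d s e) has_real_derivative (\<Sum>z\<in>A. p x z * Q z e) - (\<Sum>z\<in>A. q x z * Q z e)) (at x within {0..T})"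
      unfolding d_def by (intro derivative_intros dp dq that)
    then show ?thesis
      by (simp add: d_def sum_subtractf[symmetric] left_diff_distrib)
  qed
  define g where "g s = (\<Sum>e\<in>A. (d s e)^2)" for s
  define C where "C = 2 * (\<Sum>e\<in>A. \<Sum>z\<in>A. \<bar>Q z e\<bar>)"
  define G where "G x = (\<Sum>e\<in>A. 2 * d x e * (\<Sum>z\<in>A. d x z * Q z e))" for x
  have dg: "(g has_real_derivative G x) (at x within {0..T})" if "x \<in> {0..T}" for x
    unfolding g_def G_def
    by (rule derivative_eq_intros dd that refl | simp add: mult_ac)+
  have gnn: "g x \<ge> 0" for x unfolding g_def by (intro sum_nonneg) auto
  have dle: "(d x e)^2 \<le> g x" if "e \<in> A" for x e
    unfolding g_def by (rule member_le_sum[where f = "\<lambda>e. (d x e)^2"]) (use that fin in auto)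
  have Gle: "G x \<le> C * g x" for x
  proof -
    have "G x = (\<Sum>e\<in>A. \<Sum>z\<in>A. 2 * d x e * d x z * Q z e)"
      unfolding G_def by (simp add: sum_distrib_left mult.assoc)
    also have "\<dots> \<le> (\<Sum>e\<in>A. \<Sum>z\<in>A. \<bar>Q z e\<bar> * (2 * g x))"
    proof (intro sum_mono)
      fix e z assume e: "e \<in> A" and z: "z \<in> A"
      have "2 * d x e * d x z * Q z e \<le> \<bar>2 * d x e * d x z\<bar> * \<bar>Q z e\<bar>"
        by (metis abs_ge_self abs_mult)
      also have "\<dots> \<le> ((d x e)^2 + (d x z)^2) * \<bar>Q z e\<bar>"
      proof (intro mult_right_mono)
        have "0 \<le> (\<bar>d x e\<bar> - \<bar>d x z\<bar>)^2" by simp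
        then show "\<bar>2 * d x e * d x z\<bar> \<le> (d x e)^2 + (d x z)^2"
          by (simp add: power2_eq_square algebra_simps abs_mult)
      qed simp
      also have "\<dots> \<le> (2 * g x) * \<bar>Q z e\<bar>"
        using dle[OF e, of x] dle[OF z, of x] by (intro mult_right_mono) auto
      finally show "2 * d x e * d x z * Q z e \<le> \<bar>Q z e\<bar> * (2 * g x)" by (simp add: mult_ac)
    qed
    also have "\<dots> = C * g x"
      unfolding C_def by (simp add: sum_distrib_left sum_distrib_right mult_ac)
    finally show ?thesis .
  qed
  define h where "h s = g s * exp (- C * s)" for s
  have dh: "(h has_real_derivative (G x * exp (- C * x) - C * g x * exp (- C * x))) (at x within {0..T})"
    if "x \<in> {0..T}" for x
    unfolding h_def
    by (rule derivative_eq_intros dg that refl)+ (simp add: algebra_simps)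
  have "h T \<le> h 0"
  proof (rule DERIV_nonpos_imp_decreasing_open[OF T])
    show "continuous_on {0..T} h"
      by (rule DERIV_continuous_on[OF dh])
    fix x assume x: "0 < x" "x < T"
    have "(h has_real_derivative (G x * exp (- C * x) - C * g x * exp (- C * x))) (at x)"
      using dh[of x] x by (simp add: at_within_Icc_at)
    moreover have "G x * exp (- C * x) - C * g x * exp (- C * x) \<le> 0"
      using Gle[of x] by (simp add: left_diff_distrib[symmetric] mult_nonpos_nonneg)
    ultimately show "\<exists>y. (h has_real_derivative y) (at x) \<and> y \<le> 0" by blast
  qed
  moreover have "h 0 = 0"
    unfolding h_def g_def d_def using init by simp
  ultimately have "g T \<le> 0"
    unfolding h_def by (simp add: mult_le_0_iff)
  then have "g T = 0" using gnn[of T] by simp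
  then have "\<forall>e\<in>A. (d T e)^2 = 0"
    unfolding g_def using fin by (subst (asm) sum_nonneg_eq_0_iff) auto
  then show "e \<in> A \<Longrightarrow> p T e = q T e" by (simp add: d_def)
qed


lemma has_field_derivative_prod_within:
  assumes "\<And>x. x \<in> A \<Longrightarrow> (f x has_field_derivative f' x) (at z within S)"
  shows   "((\<lambda>u. \<Prod>x\<in>A. f x u) has_field_derivative (\<Sum>x\<in>A. f' x * (\<Prod>y\<in>A-{x}. f y z))) (at z within S)"
  using assms
proof (induction A rule: infinite_finite_induct)
  case (insert x A)
  have eq: "insert x A - {y} = insert x (A - {y})" if "y \<in> A" for y
    using insert.hyps that by auto
  show ?case
    using insert.hyps
    by (auto intro!: derivative_eq_intros insert.prems insert.IH sum.cong
             simp: sum_distrib_left sum_distrib_right eq)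
qed auto

definition aa :: "nat \<Rightarrow> real \<Rightarrow> real" where
  "aa k s = bfun k s / real k"

definition ff :: "nat \<Rightarrow> nat \<Rightarrow> real \<Rightarrow> real" where
  "ff l n s = aa l s ^ n / fact n"

definition WW :: "nat \<Rightarrow> (nat \<Rightarrow> nat) \<Rightarrow> real \<Rightarrow> real" where
  "WW N eta s = (\<Prod>l\<in>{1..N}. ff l (eta l) s)"

definition BB :: "nat \<Rightarrow> nat \<Rightarrow> (nat \<Rightarrow> nat) \<Rightarrow> real \<Rightarrow> real" where
  "BB N k eta s = real (eta k) * aa k s ^ (eta k - 1) / fact (eta k) * (\<Prod>l\<in>{1..N}-{k}. ff l (eta l) s)"

definition TT :: "nat \<Rightarrow> real \<Rightarrow> real" where
  "TT k s = (\<Sum>i\<in>{1..k-1}. real i * real (k - i) * aa i s * aa (k - i) s)"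

definition pp :: "nat \<Rightarrow> real \<Rightarrow> (nat \<Rightarrow> nat) \<Rightarrow> real" where
  "pp N s eta = fact N * exp (- ((real N)^2 * s)) * WW N eta s"

lemma bfun_aa: "k \<ge> 1 \<Longrightarrow> bfun k s = real k * aa k s"
  by (simp add: aa_def)

lemma Sb_TT: "Sb k s = TT k s"
  unfolding Sb_def TT_def
  by (intro sum.cong refl) (auto simp: bfun_aa)

lemma aa_deriv:
  assumes "T \<ge> 0" "k \<ge> 1" "x \<in> {0..T}"
  shows "(aa k has_real_derivative (real (k^2) * aa k x + TT k x)) (at x within {0..T})"
proof -
  have "((\<lambda>s. bfun k s / real k) has_real_derivative
      (real (k^2) * bfun k x + real k * Sb k x) / real k) (at x within {0..T})"
    by (rule DERIV_cdivide) (rule bfun_deriv[OF assms])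
  moreover have "(real (k^2) * bfun k x + real k * Sb k x) / real k = real (k^2) * aa k x + TT k x"
    using assms by (simp add: aa_def Sb_TT field_simps)
  ultimately show ?thesis by (simp add: aa_def[abs_def])
qed

lemma ff_deriv:
  assumes "T \<ge> 0" "l \<ge> 1" "x \<in> {0..T}"
  shows "((\<lambda>s. ff l n s) has_real_derivative
     (real (l^2) * real n * ff l n x + TT l x * (real n * aa l x ^ (n - 1) / fact n))) (at x within {0..T})"
proof -
  have d: "((\<lambda>s. aa l s ^ n / fact n) has_real_derivative
     real n * ((real (l^2) * aa l x + TT l x) * aa l x ^ (n - Suc 0)) / fact n) (at x within {0..T})"
    using DERIV_cdivide[OF DERIV_power[OF aa_deriv[OF assms], of n], of "fact n"] by simp
  have e: "real n * ((real (l^2) * aa l x + TT l x) * aa l x ^ (n - Suc 0)) / fact n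
     = real (l^2) * real n * ff l n x + TT l x * (real n * aa l x ^ (n - 1) / fact n)"
    by (cases n) (simp_all add: ff_def field_simps, simp only: add_divide_distrib[symmetric], simp add: algebra_simps)
  have fe: "ff l n = (\<lambda>s. aa l s ^ n / fact n)" by (rule ext) (simp add: ff_def)
  show ?thesis using DERIV_cong[OF d[folded fe] e] .
qed

lemma WW_deriv:
  assumes "T \<ge> 0" "x \<in> {0..T}"
  shows "((\<lambda>s. WW N eta s) has_real_derivative
     ((\<Sum>k\<in>{1..N}. real (k^2) * real (eta k)) * WW N eta x + (\<Sum>k\<in>{1..N}. TT k x * BB N k eta x)))
     (at x within {0..T})"
proof -
  have d: "((\<lambda>s. WW N eta s) has_real_derivative
     (\<Sum>k\<in>{1..N}. (real (k^2) * real (eta k) * ff k (eta k) x + TT k x * (real (eta k) * aa k x ^ (eta k - 1) / fact (eta k)))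
        * (\<Prod>l\<in>{1..N}-{k}. ff l (eta l) x))) (at x within {0..T})"
    unfolding WW_def
    by (rule has_field_derivative_prod_within) (use ff_deriv[OF assms(1) _ assms(2)] in auto)
  have "(\<Sum>k\<in>{1..N}. (real (k^2) * real (eta k) * ff k (eta k) x + TT k x * (real (eta k) * aa k x ^ (eta k - 1) / fact (eta k)))
        * (\<Prod>l\<in>{1..N}-{k}. ff l (eta l) x))
     = (\<Sum>k\<in>{1..N}. real (k^2) * real (eta k) * WW N eta x + TT k x * BB N k eta x)"
  proof (intro sum.cong refl)
    fix k assume k: "k \<in> {1..N}"
    have "WW N eta x = ff k (eta k) x * (\<Prod>l\<in>{1..N}-{k}. ff l (eta l) x)"
      unfolding WW_def using k by (simp add: prod.remove)
    then show "(real (k^2) * real (eta k) * ff k (eta k) x + TT k x * (real (eta k) * aa k x ^ (eta k - 1) / fact (eta k)))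
        * (\<Prod>l\<in>{1..N}-{k}. ff l (eta l) x) = real (k^2) * real (eta k) * WW N eta x + TT k x * BB N k eta x"
      unfolding BB_def by (simp add: algebra_simps)
  qed
  with d show ?thesis by (simp add: sum.distrib sum_distrib_right)
qed

lemma pp_deriv:
  assumes "T \<ge> 0" "x \<in> {0..T}"
  shows "((\<lambda>s. pp N s eta) has_real_derivative
     fact N * exp (- ((real N)^2 * x)) *
     (((\<Sum>k\<in>{1..N}. real (k^2) * real (eta k)) - (real N)^2) * WW N eta x + (\<Sum>k\<in>{1..N}. TT k x * BB N k eta x)))
     (at x within {0..T})"
  unfolding pp_def
  by (rule derivative_eq_intros WW_deriv[OF assms] refl)+ (simp add: algebra_simps)

lemma init_Omega: "init_state N \<in> Omega N"
proof -
  have "(\<Sum>k=1..N. k * init_state N k) = N"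
  proof (cases "N = 0")
    case False
    then have "(\<Sum>k=1..N. k * init_state N k) = (\<Sum>k\<in>{1..N}. if k = 1 then N else 0)"
      by (intro sum.cong) (auto simp: init_state_def)
    also have "\<dots> = N" using False by (simp add: sum.delta')
    finally show ?thesis .
  qed (simp)
  moreover have "\<forall>k. (k < 1 \<or> k > N) \<longrightarrow> init_state N k = 0"
    by (simp add: init_state_def)
  ultimately show ?thesis by (intro Omega_I)
qed

lemma aa_0: "aa 1 0 = 1" "aa (Suc 0) 0 = 1" "k \<ge> 2 \<Longrightarrow> aa k 0 = 0"
  by (auto simp: aa_def bfun_ge2)

lemma pp_0:
  assumes "eta \<in> Omega N"
  shows "pp N 0 eta = (if eta = init_state N then 1 else 0)"
proof (cases "eta = init_state N")
  case True
  show ?thesis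
  proof (cases "N = 0")
    case True
    then show ?thesis by (simp add: pp_def WW_def \<open>eta = init_state N\<close>)
  next
    case False
    have "WW N eta 0 = ff 1 (eta 1) 0 * (\<Prod>l\<in>{1..N}-{1}. ff l (eta l) 0)"
      unfolding WW_def by (rule prod.remove) (use False in auto)
    also have "(\<Prod>l\<in>{1..N}-{1}. ff l (eta l) 0) = 1"
      by (intro prod.neutral) (auto simp: True init_state_def ff_def)
    finally have "WW N eta 0 = 1 / fact N"
      using True by (simp add: ff_def aa_0 init_state_def)
    then show ?thesis using True by (simp add: pp_def)
  qed
next
  case False
  have "\<exists>l\<in>{2..N}. eta l \<noteq> 0"
  proof (rule ccontr)
    assume "\<not> ?thesis"
    then have z: "\<And>l. l \<in> {2..N} \<Longrightarrow> eta l = 0" by auto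
    have out: "\<And>k. k < 1 \<or> k > N \<Longrightarrow> eta k = 0" using assms by (rule Omega_out)
    have "(\<Sum>k=1..N. k * eta k) = N" using assms by (rule Omega_sum)
    moreover have "(\<Sum>k=1..N. k * eta k) = (\<Sum>k\<in>{1..N}. if k = 1 then eta 1 else 0)"
      by (intro sum.cong refl) (use z in \<open>auto simp: not_le\<close>)
    ultimately have e1: "N \<ge> 1 \<Longrightarrow> eta 1 = N" by (simp add: sum.delta')
    have "eta = init_state N"
    proof
      fix k
      consider "k = 0" | "k = 1" "N \<ge> 1" | "k = 1" "N = 0" | "2 \<le> k" "k \<le> N" | "k > N" "k \<noteq> 1"
        by linarith
      then show "eta k = init_state N k"
      proof cases
        case 1 then show ?thesis using out[of k] by (simp add: init_state_def)
      next
        case 2 then show ?thesis using e1 by (simp add: init_state_def)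
      next
        case 3 then show ?thesis using out[of k] by (simp add: init_state_def)
      next
        case 4 then show ?thesis using z[of k] by (simp add: init_state_def)
      next
        case 5 then show ?thesis using out[of k] by (simp add: init_state_def)
      qed
    qed
    with False show False by simp
  qed
  then obtain l where l: "l \<in> {2..N}" "eta l \<noteq> 0" ..
  have a0: "aa l 0 = 0" using l by (intro aa_0(3)) auto
  have h: "ff l (eta l) 0 = 0" using l(2) by (simp add: ff_def a0)
  have lI: "l \<in> {1..N}" using l(1) by auto
  have "WW N eta 0 = 0" unfolding WW_def
    by (rule prod_zero[OF finite_atLeastAtMost]) (use h lI in blast)
  then show ?thesis using False unfolding pp_def by simp
qed


lemma pairs_Sigma: "merge_pairs N = (SIGMA i:{1..N}. {i..N})"
  unfolding merge_pairs_def by auto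

lemma pairs_sym_aux:
  fixes x :: "nat \<Rightarrow> nat \<Rightarrow> real"
  shows "(\<Sum>i\<in>{1..N}. \<Sum>j\<in>{i..N}. (if i = j then x i i else x i j + x j i)) = (\<Sum>i\<in>{1..N}. \<Sum>j\<in>{1..N}. x i j)"
proof (induction N)
  case 0
  then show ?case by simp
next
  case (Suc N)
  let ?h = "\<lambda>i j. (if i = j then x i i else x i j + x j i)"
  have "(\<Sum>i\<in>{1..Suc N}. \<Sum>j\<in>{i..Suc N}. ?h i j) = (\<Sum>i\<in>{1..N}. \<Sum>j\<in>{i..Suc N}. ?h i j) + x (Suc N) (Suc N)"
    by simp
  also have "(\<Sum>i\<in>{1..N}. \<Sum>j\<in>{i..Suc N}. ?h i j) = (\<Sum>i\<in>{1..N}. (\<Sum>j\<in>{i..N}. ?h i j) + (x i (Suc N) + x (Suc N) i))"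
    by (intro sum.cong refl) auto
  also have "\<dots> = (\<Sum>i\<in>{1..N}. \<Sum>j\<in>{1..N}. x i j) + (\<Sum>i\<in>{1..N}. x i (Suc N)) + (\<Sum>i\<in>{1..N}. x (Suc N) i)"
    by (simp only: sum.distrib Suc.IH)
  finally have l: "(\<Sum>i\<in>{1..Suc N}. \<Sum>j\<in>{i..Suc N}. ?h i j) =
     (\<Sum>i\<in>{1..N}. \<Sum>j\<in>{1..N}. x i j) + (\<Sum>i\<in>{1..N}. x i (Suc N)) + (\<Sum>i\<in>{1..N}. x (Suc N) i) + x (Suc N) (Suc N)" .
  have r: "(\<Sum>i\<in>{1..Suc N}. \<Sum>j\<in>{1..Suc N}. x i j) =
     (\<Sum>i\<in>{1..N}. \<Sum>j\<in>{1..N}. x i j) + (\<Sum>i\<in>{1..N}. x i (Suc N)) + (\<Sum>i\<in>{1..N}. x (Suc N) i) + x (Suc N) (Suc N)"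
    by (simp add: sum.distrib)
  show ?case using l r by simp
qed

lemma pairs_sym:
  fixes x :: "nat \<Rightarrow> nat \<Rightarrow> real"
  shows "(\<Sum>(i,j)\<in>merge_pairs N. (if i = j then x i i else x i j + x j i)) = (\<Sum>i\<in>{1..N}. \<Sum>j\<in>{1..N}. x i j)"
proof -
  have "(\<Sum>(i,j)\<in>(SIGMA i:{1..N}. {i..N}). (if i = j then x i i else x i j + x j i))
     = (\<Sum>i\<in>{1..N}. \<Sum>j\<in>{i..N}. (if i = j then x i i else x i j + x j i))"
    by (rule sum.Sigma[symmetric]) auto
  also have "\<dots> = (\<Sum>i\<in>{1..N}. \<Sum>j\<in>{1..N}. x i j)" by (rule pairs_sym_aux)
  finally show ?thesis unfolding pairs_Sigma .
qed

lemma tri_sum: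
  fixes y :: "nat \<Rightarrow> nat \<Rightarrow> real" and B :: "nat \<Rightarrow> real"
  assumes B: "\<And>k. k > N \<Longrightarrow> B k = 0"
  shows "(\<Sum>i\<in>{1..N}. \<Sum>j\<in>{1..N}. y i j * B (i + j)) = (\<Sum>k\<in>{1..N}. (\<Sum>i\<in>{1..k-1}. y i (k - i)) * B k)"
proof -
  have "(\<Sum>k\<in>{1..N}. (\<Sum>i\<in>{1..k-1}. y i (k - i)) * B k) = (\<Sum>k\<in>{1..N}. \<Sum>i\<in>{i. i \<in> {1..N} \<and> i < k}. y i (k - i) * B k)"
  proof (intro sum.cong refl)
    fix k assume k: "k \<in> {1..N}"
    have "{1..k-1} = {i. i \<in> {1..N} \<and> i < k}" using k by auto
    then show "(\<Sum>i\<in>{1..k-1}. y i (k - i)) * B k = (\<Sum>i\<in>{i. i \<in> {1..N} \<and> i < k}. y i (k - i) * B k)"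
      by (simp add: sum_distrib_right)
  qed
  also have "\<dots> = (\<Sum>i\<in>{1..N}. \<Sum>k\<in>{k. k \<in> {1..N} \<and> i < k}. y i (k - i) * B k)"
    by (rule sum.swap_restrict) auto
  also have "\<dots> = (\<Sum>i\<in>{1..N}. \<Sum>j\<in>{1..N}. y i j * B (i + j))"
  proof (rule sum.cong[OF refl])
    fix i assume i: "i \<in> {1..N}"
    have "(\<Sum>k\<in>{k. k \<in> {1..N} \<and> i < k}. y i (k - i) * B k) = (\<Sum>j\<in>{j. j \<in> {1..N} \<and> i + j \<le> N}. y i j * B (i + j))"
      by (rule sum.reindex_bij_witness[of _ "\<lambda>j. i + j" "\<lambda>k. k - i"]) auto
    also have "\<dots> = (\<Sum>j\<in>{1..N}. y i j * B (i + j))"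
    proof (rule sum.mono_neutral_left)
      show "\<forall>j\<in>{1..N} - {j. j \<in> {1..N} \<and> i + j \<le> N}. y i j * B (i + j) = 0"
      proof
        fix j assume "j \<in> {1..N} - {j. j \<in> {1..N} \<and> i + j \<le> N}"
        then have "i + j > N" by auto
        then show "y i j * B (i + j) = 0" by (simp add: B)
      qed
    qed auto
    finally show "(\<Sum>k\<in>{k. k \<in> {1..N} \<and> i < k}. y i (k - i) * B k) = (\<Sum>j\<in>{1..N}. y i j * B (i + j))" .
  qed
  finally show ?thesis by simp
qed

definition psi2 :: "nat \<Rightarrow> nat \<Rightarrow> real" where
  "psi2 = (\<lambda>i j. 2 * real i * real j)"

lemma outflow:
  assumes eta: "eta \<in> Omega N"
  shows "(\<Sum>(i,j)\<in>merge_pairs N. merge_rate psi2 eta i j) = (real N)^2 - (\<Sum>k\<in>{1..N}. real (k^2) * real (eta k))"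
proof -
  define x where "x i j = real i * real j * real (eta i) * real (eta j) - (if i = j then real (i^2) * real (eta i) else 0)" for i j
  have "(\<Sum>(i,j)\<in>merge_pairs N. merge_rate psi2 eta i j) = (\<Sum>(i,j)\<in>merge_pairs N. (if i = j then x i i else x i j + x j i))"
    by (intro sum.cong refl) (auto simp: merge_rate_def psi2_def x_def power2_eq_square field_simps)
  also have "\<dots> = (\<Sum>i\<in>{1..N}. \<Sum>j\<in>{1..N}. x i j)" by (rule pairs_sym)
  also have "\<dots> = (\<Sum>i\<in>{1..N}. \<Sum>j\<in>{1..N}. real i * real (eta i) * (real j * real (eta j)))
      - (\<Sum>i\<in>{1..N}. real (i^2) * real (eta i))"
    by (simp add: x_def sum_subtractf sum.delta mult_ac)
  also have "(\<Sum>i\<in>{1..N}. \<Sum>j\<in>{1..N}. real i * real (eta i) * (real j * real (eta j)))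
      = (\<Sum>i\<in>{1..N}. real i * real (eta i)) * (\<Sum>j\<in>{1..N}. real j * real (eta j))"
    by (simp add: sum_product)
  also have "(\<Sum>i\<in>{1..N}. real i * real (eta i)) = real N"
    using Omega_sum[OF eta] by (metis (no_types, lifting) of_nat_mult of_nat_sum sum.cong)
  finally show ?thesis by (simp add: power2_eq_square)
qed


lemma ff_pred: "m \<ge> 1 \<Longrightarrow> ff l (m - 1) s = real m * aa l s ^ (m - 1) / fact m"
  unfolding ff_def by (subst (2) fact_reduce) auto

lemma ff_succ: "ff l (Suc n) s = aa l s * ff l n s / real (Suc n)"
  unfolding ff_def by (simp add: field_simps del: of_nat_Suc)

lemma prod3:
  assumes "finite I" "k \<in> I" "i \<in> I" "j \<in> I" "k \<noteq> i" "k \<noteq> j" "i \<noteq> j"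
  shows "prod g (I - {k}) = g i * (g j * prod g (I - {k} - {i} - {j}))"
    and "prod g I = g k * (g i * (g j * prod g (I - {k} - {i} - {j})))"
proof -
  have a: "prod g (I - {k} - {i}) = g j * prod g (I - {k} - {i} - {j})"
    by (rule prod.remove) (use assms in auto)
  have b: "prod g (I - {k}) = g i * prod g (I - {k} - {i})"
    by (rule prod.remove) (use assms in auto)
  have c: "prod g I = g k * prod g (I - {k})"
    by (rule prod.remove) (use assms in auto)
  show "prod g (I - {k}) = g i * (g j * prod g (I - {k} - {i} - {j}))" using a b by simp
  show "prod g I = g k * (g i * (g j * prod g (I - {k} - {i} - {j})))" using a b c by simp
qed

lemma prod2:
  assumes "finite I" "k \<in> I" "i \<in> I" "k \<noteq> i"
  shows "prod g (I - {k}) = g i * prod g (I - {k} - {i})"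
    and "prod g I = g k * (g i * prod g (I - {k} - {i}))"
proof -
  have b: "prod g (I - {k}) = g i * prod g (I - {k} - {i})"
    by (rule prod.remove) (use assms in auto)
  have c: "prod g I = g k * prod g (I - {k})"
    by (rule prod.remove) (use assms in auto)
  show "prod g (I - {k}) = g i * prod g (I - {k} - {i})" using b by simp
  show "prod g I = g k * (g i * prod g (I - {k} - {i}))" using b c by simp
qed

definition XX :: "nat \<Rightarrow> (nat \<Rightarrow> nat) \<Rightarrow> real \<Rightarrow> nat \<Rightarrow> nat \<Rightarrow> real" where
  "XX N eta s i j = real i * real j * aa i s * aa j s * BB N (i + j) eta s"

lemma inflow:
  assumes eta: "eta \<in> Omega N" and ij: "(i, j) \<in> merge_pairs N"
  shows "(\<Sum>z\<in>Omega N. pp N s z * (if merge z i j = eta then merge_rate psi2 z i j else 0))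
     = fact N * exp (- ((real N)^2 * s)) * (if i = j then XX N eta s i i else XX N eta s i j + XX N eta s j i)"
proof -
  from ij have i1: "1 \<le> i" "i \<le> j" "j \<le> N" by (auto simp: merge_pairs_def)
  define k where "k = i + j"
  have ki: "k \<noteq> i" "k \<noteq> j" using i1 by (auto simp: k_def)
  have mk: "merge z i j k = z k + 1" for z unfolding merge_def using ki by (simp add: k_def)
  define C where "C = fact N * exp (- ((real N)^2 * s))"
  have XXsym: "XX N eta s j i = XX N eta s i j" unfolding XX_def by (simp add: add.commute mult_ac)
  show ?thesis
  proof (cases "eta k = 0")
    case True
    have "(\<Sum>z\<in>Omega N. pp N s z * (if merge z i j = eta then merge_rate psi2 z i j else 0)) = 0"
    proof (rule sum.neutral, rule ballI)
      fix z assume "z \<in> Omega N"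
      have "merge z i j \<noteq> eta"
      proof
        assume "merge z i j = eta"
        then have "merge z i j k = eta k" by simp
        then show False using True mk[of z] by simp
      qed
      then show "pp N s z * (if merge z i j = eta then merge_rate psi2 z i j else 0) = 0" by simp
    qed
    moreover have "BB N k eta s = 0" unfolding BB_def using True by simp
    ultimately show ?thesis unfolding XX_def by (cases "i = j") (simp_all add: k_def add.commute)
  next
    case False
    have kN: "k \<le> N"
    proof (rule ccontr)
      assume "\<not> k \<le> N"
      then have "eta k = 0" by (intro Omega_out[OF eta]) simp
      with False show False by simp
    qed
    define z0 where "z0 = (\<lambda>l. eta l + (if l = i then 1 else 0) + (if l = j then 1 else 0) - (if l = k then 1 else 0))"
    have mz0: "merge z0 i j = eta"
    proof
      fix l show "merge z0 i j l = eta l"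
        unfolding merge_def z0_def using False ki by (simp add: k_def[symmetric])
    qed
    have z0Om: "z0 \<in> Omega N"
    proof (rule Omega_I)
      show "\<forall>l. (l < 1 \<or> l > N) \<longrightarrow> z0 l = 0"
      proof (intro allI impI)
        fix l assume l: "l < 1 \<or> l > N"
        then have "eta l = 0" by (rule Omega_out[OF eta])
        moreover have "l \<noteq> i" "l \<noteq> j" using l i1 by auto
        ultimately show "z0 l = 0" unfolding z0_def by simp
      qed
      have pw: "l * z0 l + (if l = k then l else 0) = l * eta l + (if l = i then l else 0) + (if l = j then l else 0)" for l
        unfolding z0_def using False ki by (cases "l = k") (auto simp: algebra_simps)
      have "(\<Sum>l=1..N. l * z0 l) + k = (\<Sum>l=1..N. l * z0 l + (if l = k then l else 0))"
        using kN i1 by (simp add: sum.distrib k_def)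
      also have "\<dots> = (\<Sum>l=1..N. l * eta l + (if l = i then l else 0) + (if l = j then l else 0))"
        by (simp only: pw)
      also have "\<dots> = N + k"
        using i1 Omega_sum[OF eta] by (simp add: sum.distrib k_def)
      finally show "(\<Sum>l=1..N. l * z0 l) = N" by simp
    qed
    have uniq: "z = z0" if z: "z \<in> Omega N" "merge z i j = eta" "merge_rate psi2 z i j \<noteq> 0" for z
    proof
      fix l
      have e: "eta l = z l - (if l = i then 1 else 0) - (if l = j then 1 else 0) + (if l = i + j then 1 else 0)"
        using fun_cong[OF z(2), of l] by (simp add: merge_def)
      have zi: "z i \<ge> 1" "z j \<ge> 1" "i = j \<Longrightarrow> z i \<ge> 2"
        using z(3) i1 by (auto simp: merge_rate_def psi2_def split: if_splits)
      show "z l = z0 l"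
        unfolding z0_def k_def using e zi ki unfolding k_def
        by (cases "l = i"; cases "l = j"; cases "l = i + j") simp_all
    qed
    have "(\<Sum>z\<in>Omega N. pp N s z * (if merge z i j = eta then merge_rate psi2 z i j else 0))
        = pp N s z0 * merge_rate psi2 z0 i j + (\<Sum>z\<in>Omega N - {z0}. pp N s z * (if merge z i j = eta then merge_rate psi2 z i j else 0))"
      using mz0 by (subst sum.remove[OF Omega_finite z0Om]) simp
    also have "(\<Sum>z\<in>Omega N - {z0}. pp N s z * (if merge z i j = eta then merge_rate psi2 z i j else 0)) = 0"
    proof (rule sum.neutral, rule ballI)
      fix z assume "z \<in> Omega N - {z0}"
      then show "pp N s z * (if merge z i j = eta then merge_rate psi2 z i j else 0) = 0"
        using uniq[of z] by auto
    qed
    finally have L: "(\<Sum>z\<in>Omega N. pp N s z * (if merge z i j = eta then merge_rate psi2 z i j else 0))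
        = C * WW N z0 s * merge_rate psi2 z0 i j" by (simp add: pp_def C_def)
    have ek: "eta k \<ge> 1" using False by simp
    have iI: "i \<in> {1..N}" "j \<in> {1..N}" "k \<in> {1..N}" using i1 kN by (auto simp: k_def)
    have z0k: "z0 k = eta k - 1" unfolding z0_def using ki by simp
    have fk: "ff k (z0 k) s = real (eta k) * aa k s ^ (eta k - 1) / fact (eta k)"
      unfolding z0k by (rule ff_pred[OF ek])
    show ?thesis
    proof (cases "i = j")
      case True
      let ?R = "{1..N} - {k} - {i}"
      have z0i: "z0 i = Suc (Suc (eta i))" unfolding z0_def using ki True by simp
      have z0R: "(\<Prod>l\<in>?R. ff l (z0 l) s) = (\<Prod>l\<in>?R. ff l (eta l) s)"
        by (intro prod.cong refl) (auto simp: z0_def True)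
      have W: "WW N z0 s = ff k (z0 k) s * (ff i (z0 i) s * (\<Prod>l\<in>?R. ff l (eta l) s))"
        unfolding WW_def z0R[symmetric] by (rule prod2(2)) (use iI ki in auto)
      have B: "BB N k eta s = real (eta k) * aa k s ^ (eta k - 1) / fact (eta k) * (ff i (eta i) s * (\<Prod>l\<in>?R. ff l (eta l) s))"
        unfolding BB_def by (subst prod2(1)[where i = i]) (use iI ki in auto)
      have r: "merge_rate psi2 z0 i j = real (Suc (Suc (eta i))) * real (Suc (eta i)) / 2 * (2 * real i * real i)"
        unfolding merge_rate_def psi2_def z0i using True by simp
      have Bi: "BB N (i + i) eta s = BB N k eta s" using True by (simp add: k_def)
      show ?thesis
        unfolding L W r fk z0i ff_succ XX_def Bi B using True
        by (simp add: C_def k_def field_simps del: of_nat_Suc)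
    next
      case False
      let ?R = "{1..N} - {k} - {i} - {j}"
      have z0i: "z0 i = Suc (eta i)" "z0 j = Suc (eta j)" unfolding z0_def using ki False by auto
      have z0R: "(\<Prod>l\<in>?R. ff l (z0 l) s) = (\<Prod>l\<in>?R. ff l (eta l) s)"
        by (intro prod.cong refl) (auto simp: z0_def)
      have W: "WW N z0 s = ff k (z0 k) s * (ff i (z0 i) s * (ff j (z0 j) s * (\<Prod>l\<in>?R. ff l (eta l) s)))"
        unfolding WW_def z0R[symmetric] by (rule prod3(2)) (use iI ki False in auto)
      have B: "BB N k eta s = real (eta k) * aa k s ^ (eta k - 1) / fact (eta k) *
          (ff i (eta i) s * (ff j (eta j) s * (\<Prod>l\<in>?R. ff l (eta l) s)))"
        unfolding BB_def by (subst prod3(1)[where i = i and j = j]) (use iI ki False in auto)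
      have r: "merge_rate psi2 z0 i j = real (z0 i) * real (z0 j) * (2 * real i * real j)"
        unfolding merge_rate_def psi2_def using False by simp
      have Bk: "BB N (i + j) eta s = BB N k eta s" by (simp add: k_def)
      show ?thesis
        unfolding L W r fk z0i ff_succ XXsym unfolding XX_def Bk B using False
        by (simp add: C_def k_def field_simps del: of_nat_Suc)
    qed
  qed
qed


lemma forward:
  assumes eta: "eta \<in> Omega N"
  shows "(\<Sum>z\<in>Omega N. pp N x z * generator psi2 N z eta) =
     fact N * exp (- ((real N)^2 * x)) *
     (((\<Sum>k\<in>{1..N}. real (k^2) * real (eta k)) - (real N)^2) * WW N eta x + (\<Sum>k\<in>{1..N}. TT k x * BB N k eta x))"
proof -
  define C where "C = fact N * exp (- ((real N)^2 * x))"
  define F where "F p z = pp N x z * (if merge z (fst p) (snd p) = eta then merge_rate psi2 z (fst p) (snd p) else 0)" for p z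
  have gen: "generator psi2 N z eta = (\<Sum>p\<in>merge_pairs N. (if merge z (fst p) (snd p) = eta then merge_rate psi2 z (fst p) (snd p) else 0))
      - (if z = eta then (\<Sum>p\<in>merge_pairs N. merge_rate psi2 z (fst p) (snd p)) else 0)" for z
    unfolding generator_def by (simp add: case_prod_beta')
  have "(\<Sum>z\<in>Omega N. pp N x z * generator psi2 N z eta) =
      (\<Sum>z\<in>Omega N. \<Sum>p\<in>merge_pairs N. F p z) -
      (\<Sum>z\<in>Omega N. pp N x z * (if z = eta then (\<Sum>p\<in>merge_pairs N. merge_rate psi2 z (fst p) (snd p)) else 0))"
    unfolding gen F_def by (simp add: right_diff_distrib sum_subtractf sum_distrib_left)
  also have "(\<Sum>z\<in>Omega N. pp N x z * (if z = eta then (\<Sum>p\<in>merge_pairs N. merge_rate psi2 z (fst p) (snd p)) else 0))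
      = pp N x eta * (\<Sum>p\<in>merge_pairs N. merge_rate psi2 eta (fst p) (snd p))"
    using eta Omega_finite[of N] by (simp add: if_distrib[of "\<lambda>v. _ * v"] sum.delta' cong: if_cong)
  also have "(\<Sum>p\<in>merge_pairs N. merge_rate psi2 eta (fst p) (snd p)) = (real N)^2 - (\<Sum>k\<in>{1..N}. real (k^2) * real (eta k))"
    using outflow[OF eta] by (simp add: case_prod_beta')
  also have "(\<Sum>z\<in>Omega N. \<Sum>p\<in>merge_pairs N. F p z) = (\<Sum>p\<in>merge_pairs N. \<Sum>z\<in>Omega N. F p z)"
    by (rule sum.swap)
  also have "\<dots> = (\<Sum>p\<in>merge_pairs N. C * (if fst p = snd p then XX N eta x (fst p) (fst p)
        else XX N eta x (fst p) (snd p) + XX N eta x (snd p) (fst p)))"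
  proof (rule sum.cong[OF refl])
    fix p assume p: "p \<in> merge_pairs N"
    obtain i j where pij: "p = (i, j)" by (cases p)
    show "(\<Sum>z\<in>Omega N. F p z) = C * (if fst p = snd p then XX N eta x (fst p) (fst p)
        else XX N eta x (fst p) (snd p) + XX N eta x (snd p) (fst p))"
      unfolding F_def C_def pij fst_conv snd_conv
      by (rule inflow[OF eta p[unfolded pij]])
  qed
  also have "\<dots> = C * (\<Sum>(i,j)\<in>merge_pairs N. (if i = j then XX N eta x i i else XX N eta x i j + XX N eta x j i))"
    by (simp add: sum_distrib_left case_prod_beta')
  also have "(\<Sum>(i,j)\<in>merge_pairs N. (if i = j then XX N eta x i i else XX N eta x i j + XX N eta x j i))
      = (\<Sum>i\<in>{1..N}. \<Sum>j\<in>{1..N}. XX N eta x i j)"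
    by (rule pairs_sym)
  also have "\<dots> = (\<Sum>i\<in>{1..N}. \<Sum>j\<in>{1..N}. (real i * real j * aa i x * aa j x) * BB N (i + j) eta x)"
    unfolding XX_def ..
  also have "\<dots> = (\<Sum>k\<in>{1..N}. (\<Sum>i\<in>{1..k-1}. real i * real (k - i) * aa i x * aa (k - i) x) * BB N k eta x)"
  proof (rule tri_sum)
    fix k assume "k > N"
    then have "eta k = 0" by (intro Omega_out[OF eta]) simp
    then show "BB N k eta x = 0" unfolding BB_def by simp
  qed
  also have "\<dots> = (\<Sum>k\<in>{1..N}. TT k x * BB N k eta x)"
    unfolding TT_def ..
  finally show ?thesis
    unfolding pp_def C_def by (simp add: algebra_simps)
qed

theorem mainTheorem6:
  fixes N :: nat and t :: real and eta :: "nat \<Rightarrow> nat"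
  assumes "N \<ge> 1" and "t \<ge> 0" and "eta \<in> Omega N"
  shows "trans_prob (\<lambda>i j. 2 * real i * real j) N t (init_state N) eta
       = fact N * exp (- ((real N)^2 * t)) *
         (\<Prod>k=1..N. (bfun k t) ^ (eta k) / (real k ^ (eta k) * fact (eta k)))"
proof -
  have psi: "(\<lambda>i j. 2 * real i * real j) = psi2" by (simp add: psi2_def)
  have initO: "init_state N \<in> Omega N" by (rule init_Omega)
  have eq: "pp N t eta = trans_prob psi2 N t (init_state N) eta"
  proof (rule ode_unique[where p = "\<lambda>s e. pp N s e" and q = "\<lambda>s e. trans_prob psi2 N s (init_state N) e"
        and Q = "generator psi2 N" and A = "Omega N", OF assms(2) Omega_finite _ _ _ assms(3)])
    fix e x assume e: "e \<in> Omega N" and x: "x \<in> {0..t}"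
    show "((\<lambda>s. pp N s e) has_real_derivative (\<Sum>z\<in>Omega N. pp N x z * generator psi2 N z e)) (at x within {0..t})"
      unfolding forward[OF e] by (rule pp_deriv[OF assms(2) x])
    show "((\<lambda>s. trans_prob psi2 N s (init_state N) e) has_real_derivative
        (\<Sum>z\<in>Omega N. trans_prob psi2 N x (init_state N) z * generator psi2 N z e)) (at x within {0..t})"
      by (rule has_field_derivative_at_within) (rule trans_deriv[OF initO e])
  next
    fix e assume e: "e \<in> Omega N"
    show "pp N 0 e = trans_prob psi2 N 0 (init_state N) e"
      unfolding pp_0[OF e] trans_prob_0 by auto
  qed
  have "WW N eta t = (\<Prod>k=1..N. (bfun k t) ^ (eta k) / (real k ^ (eta k) * fact (eta k)))"
    unfolding WW_def ff_def aa_def by (intro prod.cong refl) (simp add: power_divide)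
  then show ?thesis
    unfolding psi eq[symmetric] pp_def by simp
qed

end
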